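(* Let $X_n(\underline{d})=X_n(d_1,\dots,d_r)\subset\mathbb{C}P^{n+r}$ be a complete intersection with $d_1,\dots,d_r>1$ and set $c_1=n+r+1-\sum_{i=1}^rd_i$. Then: (1) ${\rm Td}(X_n(\underline{d}))=1$ if $c_1>0$, and ${\rm Td}(X_n(\underline{d}))=1+(-1)^n$ if $c_1=0$. (2) If $c_1<0$, then $(-1)^n{\rm Td}(X_n(\underline{d}))\geqslant\binom{n+1-c_1}{n+1}+(-1)^n$.
   Context: A complete intersection $X_n(d_1,\dots,d_r)\subset\mathbb{C}P^{n+r}$ is a compact complex $n$-dimensional manifold given as the transversal intersection of $r$ nonsingular hypersurfaces of degrees $d_1,\dots,d_r$; its first Chern class is $c_1x$ with $x$ the pullback of the hyperplane class. The Todd genus is ${\rm Td}(M)=\big(\prod_i\frac{x_i}{1-e^{-x_i}}\big)[M]$ for formal Chern roots $x_i$. Generalized binomial coefficients: $\binom{a}{m}=\frac{a(a-1)\cdots(a-m+1)}{m!}$. *)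

theory Defs
  imports "HOL-Computational_Algebra.Formal_Power_Series"
begin

definition one_minus_exp_over_x :: "real \<Rightarrow> real fps" where
  "one_minus_exp_over_x a = fps_shift 1 (1 - fps_exp (- a))"

definition todd_series :: "real fps" where
  "todd_series = inverse (one_minus_exp_over_x 1)"

text \<open>Its tangent bundle satisfies TX + (O(d_1) + ... + O(d_r)) = (n+r+1) O(1) (stably,
  restricted to X), so Td(TX) = (x/(1-e^{-x}))^{n+r+1} * prod_i (1-e^{-d_i x})/(d_i x),
  and evaluation on the fundamental class is (d_1 ... d_r) times the coefficient of x^n.\<close>
definition todd_genus_ci :: "nat \<Rightarrow> nat list \<Rightarrow> real" where
  "todd_genus_ci n ds =
     (\<Prod>d\<leftarrow>ds. real d) *
     fps_nth (todd_series ^ (n + length ds + 1) *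
      (\<Prod>d\<leftarrow>ds. fps_const (1 / real d) * one_minus_exp_over_x (real d))) n"

definition c1_ci :: "nat \<Rightarrow> nat list \<Rightarrow> int" where
  "c1_ci n ds = int n + int (length ds) + 1 - int (sum_list ds)"

end

theory Submission
  imports Defs
begin
unbundle fps_syntax

abbreviation EE :: "real fps" where "EE \<equiv> one_minus_exp_over_x 1"
abbreviation TT :: "real fps" where "TT \<equiv> todd_series"

lemma XE: "fps_X * one_minus_exp_over_x a = 1 - fps_exp (- a)"
proof (rule fps_ext)
  fix n show "(fps_X * one_minus_exp_over_x a) $ n = (1 - fps_exp (- a)) $ n"
    by (cases n) (simp_all add: one_minus_exp_over_x_def)
qed

lemma E0: "EE $ 0 = 1"
  by (simp add: one_minus_exp_over_x_def)

lemma ET: "EE * TT = 1"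
  unfolding todd_series_def by (rule inverse_mult_eq_1') (simp add: E0)

lemma T0: "TT $ 0 = 1"
proof -
  have "(EE * TT) $ 0 = 1" by (simp add: ET)
  then show ?thesis by (simp add: E0)
qed

definition SS :: "nat \<Rightarrow> real fps" where
  "SS d = (\<Sum>j<d. fps_exp (- real j))"

lemma tele: "(1 - fps_exp (-1)) * SS d = 1 - fps_exp (- real d)"
proof (induction d)
  case 0 then show ?case by (simp add: SS_def)
next
  case (Suc d)
  have e: "fps_exp (-1) * fps_exp (- real d) = fps_exp (- real (Suc d))"
    by (simp add: fps_exp_add_mult[symmetric] algebra_simps)
  have "(1 - fps_exp (-1)) * SS (Suc d) = (1 - fps_exp (-1)) * SS d + (1 - fps_exp (-1)) * fps_exp (- real d)"
    by (simp add: SS_def algebra_simps)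
  also have "\<dots> = 1 - fps_exp (- real (Suc d))" using Suc e by (simp add: algebra_simps)
  finally show ?case .
qed

lemma Ed: "one_minus_exp_over_x (real d) = EE * SS d"
proof -
  have "fps_X * one_minus_exp_over_x (real d) = fps_X * (EE * SS d)"
    by (simp add: XE mult.assoc[symmetric] tele)
  then show ?thesis by simp
qed

lemma ODE: "fps_X * fps_deriv TT = TT - TT^2 + fps_X * TT"
proof -
  have d1: "fps_deriv EE * TT + EE * fps_deriv TT = 0"
    using arg_cong[OF ET, of fps_deriv] by (simp add: add.commute)
  have d2: "EE + fps_X * fps_deriv EE = fps_exp (-1)"
    using arg_cong[OF XE[of 1], of fps_deriv] by (simp add: add.commute fps_const_neg[symmetric] del: fps_const_neg)
  have ex: "fps_exp (-1) = 1 - fps_X * EE" using XE[of 1] by simp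
  have XE': "fps_X * fps_deriv EE = 1 - fps_X * EE - EE" using d2 ex by (simp add: algebra_simps)
  have "fps_X * fps_deriv TT = fps_X * fps_deriv TT * (EE * TT)" by (simp add: ET)
  also have "\<dots> = TT * (fps_X * (EE * fps_deriv TT))" by (simp add: algebra_simps)
  also have "EE * fps_deriv TT = - (fps_deriv EE * TT)" using d1 by (simp add: eq_neg_iff_add_eq_0 add.commute)
  also have "TT * (fps_X * (- (fps_deriv EE * TT))) = - (TT^2 * (fps_X * fps_deriv EE))"
    by (simp add: algebra_simps power2_eq_square)
  also have "\<dots> = - (TT^2) + fps_X * TT * (EE * TT) + TT * (EE * TT)"
    unfolding XE' by (simp add: algebra_simps power2_eq_square)
  finally show ?thesis by (simp add: ET)
qed

lemma Tpow_step: "(TT ^ (Suc (Suc m))) $ Suc m = (TT ^ Suc m) $ m"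
proof -
  let ?n = "Suc m"
  define P where "P = TT ^ ?n"
  define Q where "Q = TT ^ Suc ?n"
  have PQ: "TT ^ m * TT = P" "TT ^ m * TT^2 = Q" "TT ^ m * (fps_X * TT) = fps_X * P"
    by (simp_all add: P_def Q_def algebra_simps power2_eq_square)
  have "fps_X * fps_deriv P = fps_const (of_nat ?n) * TT ^ m * (fps_X * fps_deriv TT)"
    unfolding P_def by (simp only: fps_deriv_power diff_Suc_1 mult_ac)
  also have "\<dots> = fps_const (of_nat ?n) * (P - Q + fps_X * P)"
    unfolding ODE by (simp only: PQ[symmetric] algebra_simps)
  finally have eq: "fps_X * fps_deriv P = fps_const (of_nat ?n) * (P - Q + fps_X * P)" .
  have "(fps_X * fps_deriv P) $ ?n = of_nat ?n * P $ ?n"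
    by (simp only: fps_X_mult_nth fps_deriv_nth) simp
  moreover have "(fps_const (of_nat ?n) * (P - Q + fps_X * P)) $ ?n
     = of_nat ?n * (P $ ?n - Q $ ?n + P $ m)" by simp
  ultimately have "of_nat ?n * P $ ?n = of_nat ?n * (P $ ?n - Q $ ?n + P $ m)"
    using eq by simp
  then have "Q $ ?n = P $ m" by (simp add: algebra_simps del: of_nat_Suc)
  then show ?thesis by (simp only: P_def Q_def)
qed

lemma Tpow_diag: "(TT ^ Suc n) $ n = 1"
  by (induction n) (simp_all add: T0 Tpow_step del: power_Suc)

definition Acoef :: "nat \<Rightarrow> nat \<Rightarrow> real" where
  "Acoef n m = (if m = 0 then 1 else (-1)^n * real ((m-1) choose n))"

lemma Acoef_rec: "Acoef n (Suc k) = Acoef n k - (if n = 0 then 0 else Acoef (n - 1) k)"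
proof (cases n)
  case 0 then show ?thesis by (simp add: Acoef_def)
next
  case (Suc n')
  show ?thesis
  proof (cases k)
    case 0 then show ?thesis using Suc by (simp add: Acoef_def)
  next
    case (Suc k')
    then show ?thesis using \<open>n = Suc n'\<close> by (simp add: Acoef_def algebra_simps)
  qed
qed

lemma base_coef: "(TT ^ Suc n * fps_exp (- real k)) $ n = Acoef n k"
proof (induction k arbitrary: n)
  case 0 then show ?case by (simp add: Tpow_diag Acoef_def del: power_Suc)
next
  case (Suc k)
  have "fps_exp (- real k) * fps_exp (-1) = fps_exp (- real k + -1)"
    by (rule fps_exp_add_mult[symmetric])
  also have "- real k + -1 = - real (Suc k)" by simp
  finally have ex: "fps_exp (- real (Suc k)) = fps_exp (- real k) * (1 - fps_X * EE)"
    using XE[of 1] by simp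
  have te: "TT ^ Suc n * EE = TT ^ n"
    using ET by (simp add: algebra_simps)
  have "TT ^ Suc n * fps_exp (- real (Suc k)) = TT ^ Suc n * fps_exp (- real k) - fps_X * (TT ^ n * fps_exp (- real k))"
  proof -
    have "TT ^ Suc n * fps_exp (- real (Suc k)) = TT ^ Suc n * fps_exp (- real k) - fps_X * ((TT ^ Suc n * EE) * fps_exp (- real k))"
      unfolding ex by (simp only: right_diff_distrib mult_1_right mult_1_left mult_ac)
    then show ?thesis by (simp only: te)
  qed
  then have "(TT ^ Suc n * fps_exp (- real (Suc k))) $ n = Acoef n k - (if n = 0 then 0 else (TT ^ n * fps_exp (- real k)) $ (n - 1))"
    using Suc.IH[of n] by simp
  also have "\<dots> = Acoef n (Suc k)"
  proof (cases n)
    case (Suc n') then show ?thesis using Suc.IH[of n'] Acoef_rec[of n k] by simp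
  qed (simp add: Acoef_rec)
  finally show ?case .
qed

fun Bx :: "(nat \<Rightarrow> real) \<Rightarrow> nat list \<Rightarrow> nat \<Rightarrow> real" where
  "Bx g [] k = g k"
| "Bx g (d # ds) k = (\<Sum>j<d. Bx g ds (k + j))"

lemma list_coef: "(TT ^ Suc n * fps_exp (- real k) * prod_list (map SS ds)) $ n = Bx (Acoef n) ds k"
proof (induction ds arbitrary: k)
  case Nil then show ?case by (simp add: base_coef del: power_Suc)
next
  case (Cons d ds)
  have "TT ^ Suc n * fps_exp (- real k) * prod_list (map SS (d # ds))
      = (\<Sum>j<d. TT ^ Suc n * fps_exp (- real (k + j)) * prod_list (map SS ds))"
  proof -
    have "fps_exp (- real (k + j)) = fps_exp (- real k) * fps_exp (- real j)" for j
    proof -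
      have "fps_exp (- real k) * fps_exp (- real j) = fps_exp (- real k + - real j)"
        by (rule fps_exp_add_mult[symmetric])
      then show ?thesis by simp
    qed
    have "TT ^ Suc n * fps_exp (- real k) * prod_list (map SS (d # ds))
       = (TT ^ Suc n * fps_exp (- real k) * prod_list (map SS ds)) * SS d"
      by (simp only: list.map prod_list.Cons mult_ac)
    also have "\<dots> = (\<Sum>j<d. (TT ^ Suc n * fps_exp (- real k) * prod_list (map SS ds)) * fps_exp (- real j))"
      by (simp only: SS_def sum_distrib_left)
    also have "\<dots> = (\<Sum>j<d. TT ^ Suc n * fps_exp (- real (k + j)) * prod_list (map SS ds))"
      by (rule sum.cong) (simp_all only: \<open>\<And>j. fps_exp (- real (k + j)) = fps_exp (- real k) * fps_exp (- real j)\<close> mult_ac)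
    finally show ?thesis .
  qed
  then show ?case by (simp only: fps_sum_nth Cons.IH Bx.simps)
qed

lemma prod_reduce:
  "prod_list (map (\<lambda>d. fps_const (1 / real d) * one_minus_exp_over_x (real d)) ds)
   = fps_const (\<Prod>d\<leftarrow>ds. 1 / real d) * EE ^ length ds * prod_list (map SS ds)"
proof (induction ds)
  case (Cons a ds)
  have "prod_list (map (\<lambda>d. fps_const (1 / real d) * one_minus_exp_over_x (real d)) (a # ds))
    = (fps_const (1 / real a) * (EE * SS a)) * (fps_const (\<Prod>d\<leftarrow>ds. 1 / real d) * EE ^ length ds * prod_list (map SS ds))"
    using Cons by (simp add: Ed)
  also have "\<dots> = (fps_const (1 / real a) * fps_const (\<Prod>d\<leftarrow>ds. 1 / real d)) * (EE * EE ^ length ds) * (SS a * prod_list (map SS ds))"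
    by (simp only: mult_ac)
  also have "\<dots> = fps_const (\<Prod>d\<leftarrow>a # ds. 1 / real d) * EE ^ length (a # ds) * prod_list (map SS (a # ds))"
    by (simp only: fps_const_mult) simp
  finally show ?case .
qed simp

lemma prod_inv: "\<forall>d\<in>set ds. d > 0 \<Longrightarrow> (\<Prod>d\<leftarrow>ds. real d) * (\<Prod>d\<leftarrow>ds. 1 / real d) = 1"
  by (induction ds) auto

lemma todd_Bx: "\<forall>d\<in>set ds. d > 0 \<Longrightarrow> todd_genus_ci n ds = Bx (Acoef n) ds 0"
proof -
  assume pos: "\<forall>d\<in>set ds. d > 0"
  have "TT ^ (n + length ds + 1) * (fps_const c * EE ^ length ds * P)
      = fps_const c * (TT ^ Suc n * fps_exp (- real 0) * P)" for c P
  proof -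
    have "TT ^ (n + length ds + 1) = TT ^ Suc n * TT ^ length ds"
      by (simp only: power_add[symmetric]) simp
    then have "TT ^ (n + length ds + 1) * EE ^ length ds = TT ^ Suc n * (EE * TT) ^ length ds"
      by (simp only: power_mult_distrib mult_ac)
    then have H: "TT ^ (n + length ds + 1) * EE ^ length ds = TT ^ Suc n" by (simp only: ET power_one mult_1_right)
    have "TT ^ (n + length ds + 1) * (fps_const c * EE ^ length ds * P) = fps_const c * (TT ^ (n + length ds + 1) * EE ^ length ds) * P"
      by (simp only: mult_ac)
    then show ?thesis by (simp only: H) simp
  qed
  note K = this
  show ?thesis
    unfolding todd_genus_ci_def prod_reduce K fps_mult_left_const_nth list_coef
    by (simp only: mult.assoc[symmetric] prod_inv[OF pos] mult_1_left)
qed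

lemma Bx_add: "Bx (\<lambda>m. f m + g m) ds k = Bx f ds k + Bx g ds k"
  by (induction ds arbitrary: k) (simp_all add: sum.distrib)

lemma Bx_cmult: "Bx (\<lambda>m. c * f m) ds k = c * Bx f ds k"
  by (induction ds arbitrary: k) (simp_all add: sum_distrib_left)

lemma Bx_delta: "\<forall>d\<in>set ds. d > 0 \<Longrightarrow> Bx (\<lambda>m. if m = 0 then 1 else 0) ds k = (if k = 0 then 1 else 0)"
proof (induction ds arbitrary: k)
  case (Cons d ds)
  then have IH: "\<And>k. Bx (\<lambda>m. if m = 0 then 1 else 0) ds k = (if k = 0 then 1 else 0)" by simp
  from Cons.prems obtain d' where d: "d = Suc d'" by (cases d) auto
  have "(\<Sum>j<d. (if k + j = 0 then 1 else 0) :: real) = (if k = 0 then 1 else 0)"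
    unfolding d by (induction d') auto
  then show ?case by (simp add: IH)
qed simp

definition sd :: "nat list \<Rightarrow> nat" where "sd ds = sum_list (map (\<lambda>d. d - 1) ds)"

lemma Bx_nonneg: "(\<And>m. f m \<ge> 0) \<Longrightarrow> Bx f ds k \<ge> 0"
  by (induction ds arbitrary: k) (auto intro: sum_nonneg)

lemma split_sum: "(\<Sum>i\<le>a + s. g i) = (\<Sum>i<a. g i) + (\<Sum>i\<le>s. g (a + i :: nat)) " for g :: "nat \<Rightarrow> real"
  by (induction s) (simp_all add: lessThan_Suc_atMost[symmetric])

lemma Bx_lower: "(\<And>m. f m \<ge> 0) \<Longrightarrow> \<forall>d\<in>set ds. d > 0 \<Longrightarrow> Bx f ds k \<ge> (\<Sum>i\<le>sd ds. f (k + i))"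
proof (induction ds arbitrary: k)
  case Nil then show ?case by (simp add: sd_def)
next
  case (Cons d ds)
  from Cons.prems obtain d' where d: "d = Suc d'" by (cases d) auto
  have IH: "\<And>k. Bx f ds k \<ge> (\<Sum>i\<le>sd ds. f (k + i))" using Cons by simp
  have single: "Bx f ds k' \<ge> f k'" for k'
  proof -
    have "f (k' + 0) \<le> (\<Sum>i\<le>sd ds. f (k' + i))"
      by (rule member_le_sum) (auto intro: Cons.prems)
    then show ?thesis using IH[of k'] by simp
  qed
  have sdc: "sd (d # ds) = d' + sd ds" by (simp add: sd_def d)
  have "(\<Sum>i\<le>sd (d # ds). f (k + i)) = (\<Sum>i<d'. f (k + i)) + (\<Sum>i\<le>sd ds. f (k + d' + i))"
    unfolding sdc split_sum by (simp add: add.assoc)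
  also have "\<dots> \<le> (\<Sum>j<d'. Bx f ds (k + j)) + Bx f ds (k + d')"
    by (intro add_mono sum_mono single IH)
  also have "\<dots> = Bx f (d # ds) k" by (simp add: d)
  finally show ?case .
qed

lemma Bx_exact: "\<forall>d\<in>set ds. d > 0 \<Longrightarrow> (\<forall>m < k + sd ds. f m = 0) \<Longrightarrow> Bx f ds k = f (k + sd ds)"
proof (induction ds arbitrary: k)
  case Nil then show ?case by (simp add: sd_def)
next
  case (Cons d ds)
  from Cons.prems obtain d' where d: "d = Suc d'" by (cases d) auto
  have sdc: "sd (d # ds) = d' + sd ds" by (simp add: sd_def d)
  have pos: "\<forall>d\<in>set ds. d > 0" using Cons.prems by simp
  have z: "Bx f ds (k + j) = 0" if "j < d'" for j
  proof -
    have "Bx f ds (k + j) = f (k + j + sd ds)"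
      using Cons.IH[OF pos] Cons.prems(2) that sdc by simp
    also have "\<dots> = 0" using Cons.prems(2) that sdc by simp
    finally show ?thesis .
  qed
  have l: "Bx f ds (k + d') = f (k + d' + sd ds)"
    using Cons.IH[OF pos] Cons.prems(2) sdc by simp
  show ?case using z l sdc by (simp add: d add.assoc)
qed

definition hh :: "nat \<Rightarrow> nat \<Rightarrow> real" where
  "hh n m = (if m = 0 then 0 else real ((m - 1) choose n))"

lemma Acoef_split: "Acoef n = (\<lambda>m. (if m = 0 then 1 else 0) + (-1)^n * hh n m)"
  by (auto simp: Acoef_def hh_def)

lemma hockey: "(\<Sum>i\<le>s. hh n (0 + i)) = real (s choose (n + 1))"
  by (induction s) (simp_all add: hh_def)

lemma sum_list_sd: "\<forall>d\<in>set ds. d > 0 \<Longrightarrow> sum_list ds = sd ds + length ds"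
  by (induction ds) (auto simp: sd_def)

theorem corollary4p5:
  fixes n :: nat and ds :: "nat list"
  assumes "\<forall>d\<in>set ds. d > 1"
  shows "(c1_ci n ds > 0 \<longrightarrow> todd_genus_ci n ds = 1)
       \<and> (c1_ci n ds = 0 \<longrightarrow> todd_genus_ci n ds = 1 + (-1) ^ n)
       \<and> (c1_ci n ds < 0 \<longrightarrow>
            (-1) ^ n * todd_genus_ci n ds
              \<ge> (real_of_int (int n + 1 - c1_ci n ds) gchoose (n + 1)) + (-1) ^ n)"
proof -
  have pos: "\<forall>d\<in>set ds. d > 0" using assms by auto
  define s where "s = sd ds"
  have c1: "c1_ci n ds = int n + 1 - int s"
    unfolding c1_ci_def s_def sum_list_sd[OF pos] by simp
  have Td: "todd_genus_ci n ds = 1 + (-1)^n * Bx (hh n) ds 0"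
    unfolding todd_Bx[OF pos] Acoef_split Bx_add Bx_cmult Bx_delta[OF pos] by simp
  have hnn: "\<And>m. hh n m \<ge> 0" by (simp add: hh_def)
  have A: "todd_genus_ci n ds = 1" if "c1_ci n ds > 0"
  proof -
    have "s \<le> n" using that c1 by simp
    then have "\<forall>m < 0 + sd ds. hh n m = 0" by (auto simp: hh_def s_def)
    then have "Bx (hh n) ds 0 = hh n (0 + s)"
      using Bx_exact[OF pos, of 0 "hh n"] by (simp add: s_def)
    also have "\<dots> = 0" using \<open>s \<le> n\<close> by (simp add: hh_def; arith)
    finally show ?thesis using Td by simp
  qed
  have B: "todd_genus_ci n ds = 1 + (-1)^n" if "c1_ci n ds = 0"
  proof -
    have "s = n + 1" using that c1 by simp
    then have "\<forall>m < 0 + sd ds. hh n m = 0" by (auto simp: hh_def s_def)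
    then have "Bx (hh n) ds 0 = hh n (0 + s)"
      using Bx_exact[OF pos, of 0 "hh n"] by (simp add: s_def)
    also have "\<dots> = 1" using \<open>s = n + 1\<close> by (simp add: hh_def)
    finally show ?thesis using Td by simp
  qed
  have C: "(-1) ^ n * todd_genus_ci n ds
              \<ge> (real_of_int (int n + 1 - c1_ci n ds) gchoose (n + 1)) + (-1) ^ n"
  proof -
    have g: "real_of_int (int n + 1 - c1_ci n ds) gchoose (n + 1) = real (s choose (n + 1))"
      unfolding c1 by (simp add: binomial_gbinomial)
    have sq: "(-1::real)^n * (-1)^n = 1" by (simp add: power_add[symmetric])
    have "(-1) ^ n * todd_genus_ci n ds = (-1)^n + Bx (hh n) ds 0"
      unfolding Td by (simp add: algebra_simps sq)
    moreover have "Bx (hh n) ds 0 \<ge> real (s choose (n + 1))"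
      using Bx_lower[of "hh n" ds 0, OF hnn pos] hockey[where s=s and n=n] by (simp add: s_def)
    ultimately show ?thesis using g by simp
  qed
  show ?thesis using A B C by blast
qed

end
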